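(* Let $A$ be an involutive alphabet, let $\Gamma$ be an involutive $A$-tree and let $u,v$ be nodes of $\Gamma$. Then $\Gamma$ with root $u$ is regular if and only if $\Gamma$ with root $v$ is regular.
   Context: An $A$-graph is a pair $(V,E)$ with $E\subseteq V\times A\times V$; it is involutive if $(u,a,v)\in E\iff(v,a^{-1},u)\in E$. A path is reduced if it contains no edge immediately followed by its inverse edge. A rooted involutive graph is a tree if every vertex is the end of a unique reduced path from the root. A multi-edge NFA (mNFA) is $\mathcal{A}=(Q,A,T,\alpha,\lambda,\omega)$ with finite state set $Q$, finite alphabet $A$, finite transition set $T$, and maps $\alpha,\omega\colon T\to Q$ (start, end) and $\lambda\colon T\to A$ (label); parallel transitions with equal label are allowed. A run is a sequence of transitions $\tau_1\cdots\tau_\ell$ with $\omega(\tau_i)=\alpha(\tau_{i+1})$. For a state $p$, $\Gamma(p)$ is the graph whose nodes are runs starting at $p$ (root: the empty run), with an edge $\varrho\to\varrho\tau$ labeled $\lambda(\tau)$, closed under adding inverse edges (passing to $A^{\pm1}$ if $A$ is not involutive); node $\varrho$ is labeled by the state where it ends. A rooted node-labeled involutive $A$-tree is regular if it is isomorphic (as a rooted node-labeled $A$-graph, i.e. via a root-preserving label-preserving graph isomorphism together with a bijection between the sets of node labels compatible with the labelings) to $\Gamma(p)$ for some state $p$ of an mNFA with alphabet $A$; a rooted involutive $A$-tree is regular if it is regular for some node labeling. *)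

theory Defs
  imports Main
begin

definition involutive_alphabet :: "'a set \<Rightarrow> ('a \<Rightarrow> 'a) \<Rightarrow> bool" where
  "involutive_alphabet A iv \<longleftrightarrow> finite A \<and> (\<forall>a\<in>A. iv a \<in> A \<and> iv (iv a) = a)"

definition A_graph :: "'a set \<Rightarrow> 'v set \<Rightarrow> ('v \<times> 'a \<times> 'v) set \<Rightarrow> bool" where
  "A_graph A V E \<longleftrightarrow> E \<subseteq> V \<times> A \<times> V"

definition involutive_graph :: "('a \<Rightarrow> 'a) \<Rightarrow> ('v \<times> 'a \<times> 'v) set \<Rightarrow> bool" where
  "involutive_graph iv E \<longleftrightarrow> (\<forall>u a v. (u, a, v) \<in> E \<longleftrightarrow> (v, iv a, u) \<in> E)"

definition inv_edge :: "('a \<Rightarrow> 'a) \<Rightarrow> ('v \<times> 'a \<times> 'v) \<Rightarrow> ('v \<times> 'a \<times> 'v)" where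
  "inv_edge iv e = (case e of (u, a, v) \<Rightarrow> (v, iv a, u))"

fun is_path :: "('v \<times> 'a \<times> 'v) set \<Rightarrow> 'v \<Rightarrow> ('v \<times> 'a \<times> 'v) list \<Rightarrow> 'v \<Rightarrow> bool" where
  "is_path E x [] y \<longleftrightarrow> x = y"
| "is_path E x (e # es) y \<longleftrightarrow> e \<in> E \<and> fst e = x \<and> is_path E (snd (snd e)) es y"

definition reduced_path :: "('a \<Rightarrow> 'a) \<Rightarrow> ('v \<times> 'a \<times> 'v) list \<Rightarrow> bool" where
  "reduced_path iv es \<longleftrightarrow> (\<forall>i. Suc i < length es \<longrightarrow> es ! Suc i \<noteq> inv_edge iv (es ! i))"

definition rooted_tree :: "('a \<Rightarrow> 'a) \<Rightarrow> 'v set \<Rightarrow> ('v \<times> 'a \<times> 'v) set \<Rightarrow> 'v \<Rightarrow> bool" where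
  "rooted_tree iv V E r \<longleftrightarrow> r \<in> V \<and> (\<forall>v\<in>V. \<exists>!es. is_path E r es v \<and> reduced_path iv es)"

text \<open>States and transitions are taken to be finite sets of natural numbers (w.l.o.g.).\<close>
record 'a mnfa =
  states :: "nat set"
  trans :: "nat set"
  src_st :: "nat \<Rightarrow> nat"
  lab :: "nat \<Rightarrow> 'a"
  tgt_st :: "nat \<Rightarrow> nat"

definition mnfa_wf :: "'a set \<Rightarrow> 'a mnfa \<Rightarrow> bool" where
  "mnfa_wf A M \<longleftrightarrow> finite (states M) \<and> finite (trans M) \<and>
     (\<forall>t\<in>trans M. src_st M t \<in> states M \<and> tgt_st M t \<in> states M \<and> lab M t \<in> A)"

fun is_run :: "'a mnfa \<Rightarrow> nat \<Rightarrow> nat list \<Rightarrow> bool" where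
  "is_run M p [] \<longleftrightarrow> True"
| "is_run M p (t # ts) \<longleftrightarrow> t \<in> trans M \<and> src_st M t = p \<and> is_run M (tgt_st M t) ts"

fun run_end :: "'a mnfa \<Rightarrow> nat \<Rightarrow> nat list \<Rightarrow> nat" where
  "run_end M p [] = p"
| "run_end M p (t # ts) = run_end M (tgt_st M t) ts"

text \<open>Nodes of Gamma(p): runs starting at p (root: the empty run).\<close>
definition runs :: "'a mnfa \<Rightarrow> nat \<Rightarrow> nat list set" where
  "runs M p = {\<rho>. is_run M p \<rho>}"

definition Gamma_edges :: "('a \<Rightarrow> 'a) \<Rightarrow> 'a mnfa \<Rightarrow> nat \<Rightarrow> (nat list \<times> 'a \<times> nat list) set" where
  "Gamma_edges iv M p =
     {(\<rho>, lab M t, \<rho> @ [t]) | \<rho> t. is_run M p (\<rho> @ [t])} \<union>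
     {(\<rho> @ [t], iv (lab M t), \<rho>) | \<rho> t. is_run M p (\<rho> @ [t])}"

text \<open>Rooted node-labelled tree (V,E,r,l) is regular: isomorphic to Gamma(p) for some mNFA,
  via a root-preserving graph isomorphism f and a bijection g between the sets of node labels
  compatible with the labellings (node rho of Gamma(p) is labelled by run_end).\<close>
definition regular_labelled ::
  "'a set \<Rightarrow> ('a \<Rightarrow> 'a) \<Rightarrow> 'v set \<Rightarrow> ('v \<times> 'a \<times> 'v) set \<Rightarrow> 'v \<Rightarrow> ('v \<Rightarrow> 'l) \<Rightarrow> bool" where
  "regular_labelled A iv V E r l \<longleftrightarrow>
     (\<exists>(M :: 'a mnfa) p f g.
        mnfa_wf A M \<and> p \<in> states M \<and>
        bij_betw f V (runs M p) \<and> f r = [] \<and>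
        (\<forall>x\<in>V. \<forall>y\<in>V. \<forall>a. (x, a, y) \<in> E \<longleftrightarrow> (f x, a, f y) \<in> Gamma_edges iv M p) \<and>
        bij_betw g (l ` V) (run_end M p ` runs M p) \<and>
        (\<forall>x\<in>V. run_end M p (f x) = g (l x)))"

text \<open>Unlabelled rooted tree is regular if regular for some node labelling.  Labels are taken
  in nat w.l.o.g. (the label set of a regular labelled tree is finite).\<close>
definition regular_tree ::
  "'a set \<Rightarrow> ('a \<Rightarrow> 'a) \<Rightarrow> 'v set \<Rightarrow> ('v \<times> 'a \<times> 'v) set \<Rightarrow> 'v \<Rightarrow> bool" where
  "regular_tree A iv V E r \<longleftrightarrow> (\<exists>l :: 'v \<Rightarrow> nat. regular_labelled A iv V E r l)"

end

theory Submission imports Defs begin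

definition emb :: "nat list \<Rightarrow> nat list" where "emb \<rho> = map (\<lambda>t. 4*t) \<rho>"

definition rr :: "('a\<Rightarrow>'a) \<Rightarrow> 'a mnfa \<Rightarrow> nat \<Rightarrow> nat \<Rightarrow> 'a mnfa" where
 "rr iv M p t0 = \<lparr>states = {0,1} \<union> (\<lambda>s. s+2) ` states M,
   trans = {n. n = 3 \<or> (n mod 4 = 0 \<and> n div 4 \<in> trans M)
     \<or> (n mod 4 = 1 \<and> n div 4 \<in> trans M \<and> src_st M (n div 4) = tgt_st M t0)
     \<or> (n mod 4 = 2 \<and> n div 4 \<in> trans M \<and> src_st M (n div 4) = p \<and> n div 4 \<noteq> t0)},
   src_st = (\<lambda>n. if n = 3 then 0 else if n mod 4 = 0 then src_st M (n div 4) + 2 else if n mod 4 = 1 then 0 else 1),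
   lab = (\<lambda>n. if n = 3 then iv (lab M t0) else lab M (n div 4)),
   tgt_st = (\<lambda>n. if n = 3 then 1 else tgt_st M (n div 4) + 2)\<rparr>"

lemma d4[simp]:
  "Suc (4*t) div 4 = t" "Suc (4*t) mod 4 = 1" "Suc (Suc (4*t)) div 4 = t" "Suc (Suc (4*t)) mod 4 = 2"
  "(4*t) div 4 = (t::nat)" "(4*t) mod 4 = (0::nat)" "4*t \<noteq> (3::nat)" "Suc (4*t) \<noteq> 3" "Suc (Suc (4*t)) \<noteq> 3"
  by presburger+

lemma rr_sel:
  "states (rr iv M p t0) = {0,1} \<union> (\<lambda>s. s+2) ` states M"
  "3 \<in> trans (rr iv M p t0)"
  "src_st (rr iv M p t0) 3 = 0" "tgt_st (rr iv M p t0) 3 = 1" "lab (rr iv M p t0) 3 = iv (lab M t0)"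
  "4*t \<in> trans (rr iv M p t0) \<longleftrightarrow> t \<in> trans M"
  "Suc (4*t) \<in> trans (rr iv M p t0) \<longleftrightarrow> t \<in> trans M \<and> src_st M t = tgt_st M t0"
  "Suc (Suc (4*t)) \<in> trans (rr iv M p t0) \<longleftrightarrow> t \<in> trans M \<and> src_st M t = p \<and> t \<noteq> t0"
  "src_st (rr iv M p t0) (4*t) = src_st M t + 2"
  "src_st (rr iv M p t0) (Suc (4*t)) = 0"
  "src_st (rr iv M p t0) (Suc (Suc (4*t))) = 1"
  "tgt_st (rr iv M p t0) (Suc (4*t)) = tgt_st M t + 2"
  "tgt_st (rr iv M p t0) (Suc (Suc (4*t))) = tgt_st M t + 2"
  "lab (rr iv M p t0) (Suc (4*t)) = lab M t"
  "lab (rr iv M p t0) (Suc (Suc (4*t))) = lab M t"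
  "lab (rr iv M p t0) (4*t) = lab M t"
  "tgt_st (rr iv M p t0) (4*t) = tgt_st M t + 2"
  by (simp_all add: rr_def)

lemma rr_cases:
  assumes "c \<in> trans (rr iv M p t0)"
  obtains "c = 3" | t where "c = 4*t" | t where "c = Suc (4*t)" | t where "c = Suc (Suc (4*t))"
proof -
  have "c = 3 \<or> c mod 4 = 0 \<or> c mod 4 = 1 \<or> c mod 4 = 2" using assms by (auto simp: rr_def)
  moreover have "c = 4*(c div 4) + c mod 4" by simp
  ultimately show ?thesis using that by (metis add.right_neutral add_Suc_right one_add_one plus_1_eq_Suc)
qed

lemma rr_run_old:
  "is_run (rr iv M p t0) (s+2) \<sigma> \<longleftrightarrow> (\<exists>\<rho>. \<sigma> = emb \<rho> \<and> is_run M s \<rho>)"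
proof (induction \<sigma> arbitrary: s)
  case Nil
  then show ?case by (simp add: emb_def)
next
  case (Cons c \<sigma>)
  show ?case
  proof
    assume h: "is_run (rr iv M p t0) (s+2) (c # \<sigma>)"
    then have ct: "c \<in> trans (rr iv M p t0)" by simp
    from h obtain t where c: "c = 4*t" "src_st M t = s" "t \<in> trans M"
      by (cases rule: rr_cases[OF ct]) (auto simp: rr_sel)
    from h c Cons.IH[of "tgt_st M t"] obtain \<rho> where "\<sigma> = emb \<rho>" "is_run M (tgt_st M t) \<rho>"
      by (auto simp: rr_sel)
    then show "\<exists>\<rho>. c # \<sigma> = emb \<rho> \<and> is_run M s \<rho>" using c
      by (intro exI[of _ "t # \<rho>"]) (auto simp: emb_def)
  next
    assume "\<exists>\<rho>. c # \<sigma> = emb \<rho> \<and> is_run M s \<rho>"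
    then obtain t \<rho> where "c = 4*t" "\<sigma> = emb \<rho>" "t \<in> trans M" "src_st M t = s" "is_run M (tgt_st M t) \<rho>"
      by (auto simp: emb_def Cons_eq_map_conv)
    then show "is_run (rr iv M p t0) (s+2) (c # \<sigma>)" using Cons.IH[of "tgt_st M t"]
      by (auto simp: rr_sel)
  qed
qed

lemma rr_run_old2:
  "is_run (rr iv M p t0) (Suc (Suc s)) \<sigma> \<longleftrightarrow> (\<exists>\<rho>. \<sigma> = emb \<rho> \<and> is_run M s \<rho>)"
  using rr_run_old[of iv M p t0 s \<sigma>] by simp

lemma rr_run_1:
  "is_run (rr iv M p t0) 1 \<sigma> \<longleftrightarrow> \<sigma> = [] \<or> (\<exists>t \<rho>. \<sigma> = Suc (Suc (4*t)) # emb \<rho> \<and> t \<in> trans M \<and> src_st M t = p \<and> t \<noteq> t0 \<and> is_run M (tgt_st M t) \<rho>)"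
proof (cases \<sigma>)
  case (Cons c \<sigma>')
  have "is_run (rr iv M p t0) 1 (c # \<sigma>') \<longleftrightarrow> (\<exists>t. c = Suc (Suc (4*t)) \<and> t \<in> trans M \<and> src_st M t = p \<and> t \<noteq> t0 \<and> is_run (rr iv M p t0) (tgt_st M t + 2) \<sigma>')"
  proof
    assume h: "is_run (rr iv M p t0) 1 (c # \<sigma>')"
    then have ct: "c \<in> trans (rr iv M p t0)" by simp
    show "\<exists>t. c = Suc (Suc (4*t)) \<and> t \<in> trans M \<and> src_st M t = p \<and> t \<noteq> t0 \<and> is_run (rr iv M p t0) (tgt_st M t + 2) \<sigma>'"
      using h by (cases rule: rr_cases[OF ct]) (auto simp: rr_sel rr_run_old2)
  qed (auto simp: rr_sel rr_run_old2)
  then show ?thesis using Cons by (auto simp: rr_run_old2)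
qed simp

lemma rr_run_1':
  "is_run (rr iv M p t0) (Suc 0) \<sigma> \<longleftrightarrow> \<sigma> = [] \<or> (\<exists>t \<rho>. \<sigma> = Suc (Suc (4*t)) # emb \<rho> \<and> t \<in> trans M \<and> src_st M t = p \<and> t \<noteq> t0 \<and> is_run M (tgt_st M t) \<rho>)"
  using rr_run_1 by simp

lemma rr_run_0:
  "is_run (rr iv M p t0) 0 \<sigma> \<longleftrightarrow> \<sigma> = [] 
    \<or> (\<exists>t \<rho>. \<sigma> = Suc (4*t) # emb \<rho> \<and> t \<in> trans M \<and> src_st M t = tgt_st M t0 \<and> is_run M (tgt_st M t) \<rho>)
    \<or> \<sigma> = [3]
    \<or> (\<exists>t \<rho>. \<sigma> = 3 # Suc (Suc (4*t)) # emb \<rho> \<and> t \<in> trans M \<and> src_st M t = p \<and> t \<noteq> t0 \<and> is_run M (tgt_st M t) \<rho>)"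
proof (cases \<sigma>)
  case (Cons c \<sigma>')
  have "is_run (rr iv M p t0) 0 (c # \<sigma>') \<longleftrightarrow> (c = 3 \<and> is_run (rr iv M p t0) 1 \<sigma>') \<or> (\<exists>t. c = Suc (4*t) \<and> t \<in> trans M \<and> src_st M t = tgt_st M t0 \<and> is_run (rr iv M p t0) (tgt_st M t + 2) \<sigma>')"
  proof
    assume h: "is_run (rr iv M p t0) 0 (c # \<sigma>')"
    then have ct: "c \<in> trans (rr iv M p t0)" by simp
    show "(c = 3 \<and> is_run (rr iv M p t0) 1 \<sigma>') \<or> (\<exists>t. c = Suc (4*t) \<and> t \<in> trans M \<and> src_st M t = tgt_st M t0 \<and> is_run (rr iv M p t0) (tgt_st M t + 2) \<sigma>')"
      using h by (cases rule: rr_cases[OF ct]) (auto simp: rr_sel rr_run_old2)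
  qed (auto simp: rr_sel rr_run_old2)
  then show ?thesis using Cons by (auto simp: rr_sel rr_run_old2 rr_run_1 rr_run_1')
qed simp


definition unemb :: "nat list \<Rightarrow> nat list" where "unemb \<rho> = map (\<lambda>n. n div 4) \<rho>"

lemma unemb_emb[simp]: "unemb (emb \<rho>) = \<rho>"
  by (induction \<rho>) (auto simp: emb_def unemb_def)

lemma emb_simps[simp]: "emb [] = []" "emb (t # \<rho>) = 4*t # emb \<rho>" "emb (\<rho> @ \<rho>') = emb \<rho> @ emb \<rho>'"
  by (auto simp: emb_def)

lemma unemb_simps[simp]: "unemb [] = []" "unemb (t # \<rho>) = t div 4 # unemb \<rho>" "unemb (\<rho> @ \<rho>') = unemb \<rho> @ unemb \<rho>'"
  by (auto simp: unemb_def)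

definition hh :: "nat \<Rightarrow> nat list \<Rightarrow> nat list" where
"hh t0 x = (case x of [] \<Rightarrow> [3] | t # \<rho> \<Rightarrow> if t = t0 then (case \<rho> of [] \<Rightarrow> [] | t' # \<rho>' \<Rightarrow> Suc (4*t') # emb \<rho>') else 3 # Suc (Suc (4*t)) # emb \<rho>)"

definition hi :: "nat \<Rightarrow> nat list \<Rightarrow> nat list" where
"hi t0 \<sigma> = (case \<sigma> of [] \<Rightarrow> [t0] | c # \<rho> \<Rightarrow> if c = 3 then (case \<rho> of [] \<Rightarrow> [] | c' # \<rho>' \<Rightarrow> (c' div 4) # unemb \<rho>') else t0 # (c div 4) # unemb \<rho>)"

definition adj :: "('a \<Rightarrow> 'a) \<Rightarrow> 'a mnfa \<Rightarrow> nat list \<Rightarrow> 'a \<Rightarrow> nat list \<Rightarrow> bool" where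
"adj iv M x a y \<longleftrightarrow> (\<exists>t. y = x @ [t] \<and> a = lab M t) \<or> (\<exists>t. x = y @ [t] \<and> a = iv (lab M t))"

lemma is_run_append: "is_run M p (x @ y) \<longleftrightarrow> is_run M p x \<and> is_run M (run_end M p x) y"
  by (induction x arbitrary: p) auto

lemma gamma_adj:
  assumes "x \<in> runs M p" "y \<in> runs M p"
  shows "(x, a, y) \<in> Gamma_edges iv M p \<longleftrightarrow> adj iv M x a y"
  using assms unfolding Gamma_edges_def adj_def runs_def by auto

lemma adj_sym:
  assumes "is_run M p x" "is_run M p y" "\<forall>t\<in>trans M. iv (iv (lab M t)) = lab M t"
    and "adj iv M x a y"
  shows "adj iv M y (iv a) x"
  using assms unfolding adj_def by (auto simp: is_run_append)

lemma run_p_cases: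
  assumes "is_run M p x" "t0 \<in> trans M" "src_st M t0 = p"
  shows "x = [] \<or> (\<exists>\<rho>. x = t0 # \<rho> \<and> is_run M (tgt_st M t0) \<rho>) \<or> (\<exists>t \<rho>. x = t # \<rho> \<and> t \<noteq> t0 \<and> t \<in> trans M \<and> src_st M t = p \<and> is_run M (tgt_st M t) \<rho>)"
  using assms by (cases x) auto

context
  fixes iv :: "'a \<Rightarrow> 'a" and M :: "'a mnfa" and p t0 :: nat
  assumes t0: "t0 \<in> trans M" "src_st M t0 = p"
begin

lemma H1: assumes "is_run M p x" shows "is_run (rr iv M p t0) 0 (hh t0 x)"
  using run_p_cases[OF assms t0] by (elim disjE exE conjE) (auto simp: hh_def rr_run_0 rr_sel rr_run_old2 split: list.splits)

lemma H3: assumes "is_run M p x" shows "hi t0 (hh t0 x) = x"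
  using run_p_cases[OF assms t0] by (elim disjE exE conjE) (auto simp: hh_def hi_def split: list.splits)

lemma H2: "is_run (rr iv M p t0) 0 \<sigma> \<Longrightarrow> is_run M p (hi t0 \<sigma>)"
  unfolding rr_run_0 using t0
  apply (elim disjE exE conjE)
  apply (auto simp: hi_def)
  done

lemma H4: "is_run (rr iv M p t0) 0 \<sigma> \<Longrightarrow> hh t0 (hi t0 \<sigma>) = \<sigma>"
  unfolding rr_run_0 using t0
  apply (elim disjE exE conjE)
  apply (auto simp: hi_def hh_def)
  done

lemma F1:
  assumes inv0: "iv (iv (lab M t0)) = lab M t0" and r: "is_run M p (x @ [t])"
  shows "adj iv (rr iv M p t0) (hh t0 x) (lab M t) (hh t0 (x @ [t]))"
proof (cases x)
  case Nil
  show ?thesis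
  proof (cases "t = t0")
    case True
    then show ?thesis using Nil inv0 unfolding adj_def
      by (intro disjI2 exI[of _ 3]) (simp add: hh_def rr_sel)
  next
    case False
    then show ?thesis using Nil unfolding adj_def
      by (intro disjI1 exI[of _ "Suc (Suc (4*t))"]) (simp add: hh_def rr_sel)
  qed
next
  case (Cons t1 \<rho>)
  show ?thesis
  proof (cases "t1 = t0")
    case True
    show ?thesis
    proof (cases \<rho>)
      case Nil
      then show ?thesis using Cons True unfolding adj_def
        by (intro disjI1 exI[of _ "Suc (4*t)"]) (simp add: hh_def rr_sel)
    next
      case (Cons t' \<rho>')
      then show ?thesis using \<open>x = t1 # \<rho>\<close> True unfolding adj_def
        by (intro disjI1 exI[of _ "4*t"]) (simp add: hh_def rr_sel)
    qed
  next
    case False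
    then show ?thesis using Cons unfolding adj_def
      by (intro disjI1 exI[of _ "4*t"]) (simp add: hh_def rr_sel)
  qed
qed

lemma F2:
  assumes r: "is_run (rr iv M p t0) 0 (\<sigma> @ [c])"
  shows "adj iv M (hi t0 \<sigma>) (lab (rr iv M p t0) c) (hi t0 (\<sigma> @ [c]))"
  using r unfolding rr_run_0
proof (elim disjE exE conjE)
  assume "\<sigma> @ [c] = []" then show ?thesis by simp
next
  fix t \<rho> assume h: "\<sigma> @ [c] = Suc (4 * t) # emb \<rho>"
  show ?thesis
  proof (cases \<rho> rule: rev_exhaust)
    case Nil
    then have "\<sigma> = []" "c = Suc (4*t)" using h by auto
    then show ?thesis unfolding adj_def
      by (intro disjI1 exI[of _ t]) (simp add: hi_def rr_sel)
  next
    case (snoc \<rho>1 t2)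
    then have "\<sigma> = Suc (4 * t) # emb \<rho>1" "c = 4*t2" using h by auto
    then show ?thesis unfolding adj_def
      by (intro disjI1 exI[of _ t2]) (simp add: hi_def rr_sel)
  qed
next
  assume "\<sigma> @ [c] = [3]"
  then have "\<sigma> = []" "c = 3" by auto
  then show ?thesis unfolding adj_def
    by (intro disjI2 exI[of _ t0]) (simp add: hi_def rr_sel)
next
  fix t \<rho> assume h: "\<sigma> @ [c] = 3 # Suc (Suc (4 * t)) # emb \<rho>"
  show ?thesis
  proof (cases \<rho> rule: rev_exhaust)
    case Nil
    then have "\<sigma> = [3]" "c = Suc (Suc (4*t))" using h by auto
    then show ?thesis unfolding adj_def
      by (intro disjI1 exI[of _ t]) (simp add: hi_def rr_sel)
  next
    case (snoc \<rho>1 t2)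
    then have "\<sigma> = 3 # Suc (Suc (4 * t)) # emb \<rho>1" "c = 4*t2" using h by auto
    then show ?thesis unfolding adj_def
      by (intro disjI1 exI[of _ t2]) (simp add: hi_def rr_sel)
  qed
qed

lemma rr_wf:
  assumes wf: "mnfa_wf A M" and inv: "involutive_alphabet A iv"
  shows "mnfa_wf A (rr iv M p t0)" "0 \<in> states (rr iv M p t0)"
proof -
  have fin: "finite (trans M)" "finite (states M)" using wf by (auto simp: mnfa_wf_def)
  have "trans (rr iv M p t0) \<subseteq> {..4 * Max (trans M) + 3}"
  proof
    fix n assume n: "n \<in> trans (rr iv M p t0)"
    show "n \<in> {..4 * Max (trans M) + 3}"
    proof (cases rule: rr_cases[OF n])
      case 1 then show ?thesis by simp
    next
      case (2 t) then have "t \<le> Max (trans M)" using n fin by (simp add: rr_sel)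
      then show ?thesis using 2 by simp
    next
      case (3 t) then have "t \<le> Max (trans M)" using n fin by (simp add: rr_sel)
      then show ?thesis using 3 by simp
    next
      case (4 t) then have "t \<le> Max (trans M)" using n fin by (simp add: rr_sel)
      then show ?thesis using 4 by simp
    qed
  qed
  then have ft: "finite (trans (rr iv M p t0))" using finite_subset by blast
  have lab0: "lab M t0 \<in> A" using wf t0 by (auto simp: mnfa_wf_def)
  have tr: "src_st (rr iv M p t0) n \<in> states (rr iv M p t0) \<and> tgt_st (rr iv M p t0) n \<in> states (rr iv M p t0) \<and> lab (rr iv M p t0) n \<in> A"
    if n: "n \<in> trans (rr iv M p t0)" for n
  proof (cases rule: rr_cases[OF n])
    case 1 then show ?thesis using lab0 inv by (simp add: rr_sel involutive_alphabet_def)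
  next
    case (2 t) then show ?thesis using n wf by (auto simp: rr_sel mnfa_wf_def)
  next
    case (3 t) then show ?thesis using n wf by (auto simp: rr_sel mnfa_wf_def)
  next
    case (4 t) then show ?thesis using n wf by (auto simp: rr_sel mnfa_wf_def)
  qed
  show "mnfa_wf A (rr iv M p t0)" using ft fin tr unfolding mnfa_wf_def by (simp add: rr_sel)
  show "0 \<in> states (rr iv M p t0)" by (simp add: rr_sel)
qed

end


lemma iso_generic:
  assumes symM: "\<forall>t\<in>trans M. iv (iv (lab M t)) = lab M t"
    and symM': "\<forall>t\<in>trans M'. iv (iv (lab M' t)) = lab M' t"
    and h1: "\<And>x. is_run M p x \<Longrightarrow> is_run M' p' (h x)"
    and h2: "\<And>\<sigma>. is_run M' p' \<sigma> \<Longrightarrow> is_run M p (g \<sigma>)"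
    and h3: "\<And>x. is_run M p x \<Longrightarrow> g (h x) = x"
    and h4: "\<And>\<sigma>. is_run M' p' \<sigma> \<Longrightarrow> h (g \<sigma>) = \<sigma>"
    and F1: "\<And>x t. is_run M p (x @ [t]) \<Longrightarrow> adj iv M' (h x) (lab M t) (h (x @ [t]))"
    and F2: "\<And>\<sigma> c. is_run M' p' (\<sigma> @ [c]) \<Longrightarrow> adj iv M (g \<sigma>) (lab M' c) (g (\<sigma> @ [c]))"
  shows "bij_betw h (runs M p) (runs M' p')"
    and "\<forall>x\<in>runs M p. \<forall>y\<in>runs M p. \<forall>a. (x, a, y) \<in> Gamma_edges iv M p \<longleftrightarrow> (h x, a, h y) \<in> Gamma_edges iv M' p'"
proof -
  show "bij_betw h (runs M p) (runs M' p')"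
    by (rule bij_betw_byWitness[where f'=g]) (auto simp: runs_def h1 h2 h3 h4)
  show "\<forall>x\<in>runs M p. \<forall>y\<in>runs M p. \<forall>a. (x, a, y) \<in> Gamma_edges iv M p \<longleftrightarrow> (h x, a, h y) \<in> Gamma_edges iv M' p'"
  proof (intro ballI allI)
    fix x y a assume x: "x \<in> runs M p" and y: "y \<in> runs M p"
    have rx: "is_run M p x" "is_run M' p' (h x)" and ry: "is_run M p y" "is_run M' p' (h y)"
      using x y h1 by (auto simp: runs_def)
    have "adj iv M x a y \<longleftrightarrow> adj iv M' (h x) a (h y)"
    proof
      assume "adj iv M x a y"
      then show "adj iv M' (h x) a (h y)" unfolding adj_def[of iv M]
      proof (elim disjE exE conjE)
        fix t assume "y = x @ [t]" "a = lab M t"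
        then show ?thesis using F1[of x t] ry by simp
      next
        fix t assume e: "x = y @ [t]" "a = iv (lab M t)"
        have "adj iv M' (h y) (lab M t) (h x)" using F1[of y t] rx e by simp
        then show ?thesis using adj_sym[OF ry(2) rx(2) symM'] e by simp
      qed
    next
      assume "adj iv M' (h x) a (h y)"
      then show "adj iv M x a y" unfolding adj_def[of iv M']
      proof (elim disjE exE conjE)
        fix c assume e: "h y = h x @ [c]" "a = lab M' c"
        then show ?thesis using F2[of "h x" c] ry rx h3[OF rx(1)] h3[OF ry(1)] by simp
      next
        fix c assume e: "h x = h y @ [c]" "a = iv (lab M' c)"
        have "adj iv M y (lab M' c) x" using F2[of "h y" c] rx ry h3[OF rx(1)] h3[OF ry(1)] e by simp
        then show ?thesis using adj_sym[OF ry(1) rx(1) symM] e by simp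
      qed
    qed
    then show "(x, a, y) \<in> Gamma_edges iv M p \<longleftrightarrow> (h x, a, h y) \<in> Gamma_edges iv M' p'"
      using gamma_adj[OF x y] gamma_adj[of "h x" M' p' "h y"] rx ry by (simp add: runs_def)
  qed
qed

definition iso_at where
  "iso_at iv M p M' p' h \<rho>0 \<longleftrightarrow> bij_betw h (runs M p) (runs M' p') \<and> h \<rho>0 = [] \<and>
    (\<forall>x\<in>runs M p. \<forall>y\<in>runs M p. \<forall>a. (x, a, y) \<in> Gamma_edges iv M p \<longleftrightarrow> (h x, a, h y) \<in> Gamma_edges iv M' p')"

lemma wf_sym: "mnfa_wf A M \<Longrightarrow> involutive_alphabet A iv \<Longrightarrow> \<forall>t\<in>trans M. iv (iv (lab M t)) = lab M t"
  by (auto simp: mnfa_wf_def involutive_alphabet_def)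

lemma step:
  assumes wf: "mnfa_wf A M" and inv: "involutive_alphabet A iv"
    and t0: "t0 \<in> trans M" "src_st M t0 = p"
  shows "\<exists>(M' :: 'a mnfa) p' h. mnfa_wf A M' \<and> p' \<in> states M' \<and> iso_at iv M p M' p' h [t0]"
proof (intro exI conjI)
  show "mnfa_wf A (rr iv M p t0)" "0 \<in> states (rr iv M p t0)" using rr_wf[OF t0 wf inv] by auto
  have s1: "\<forall>t\<in>trans M. iv (iv (lab M t)) = lab M t" using wf_sym[OF wf inv] .
  have s2: "\<forall>t\<in>trans (rr iv M p t0). iv (iv (lab (rr iv M p t0) t)) = lab (rr iv M p t0) t"
    using wf_sym[OF rr_wf(1)[OF t0 wf inv] inv] .
  have inv0: "iv (iv (lab M t0)) = lab M t0" using s1 t0 by auto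
  have f1: "adj iv (rr iv M p t0) (hh t0 x) (lab M t) (hh t0 (x @ [t]))" if "is_run M p (x @ [t])" for x t
    by (rule F1) (use t0 inv0 that in auto)
  have f2: "adj iv M (hi t0 \<sigma>) (lab (rr iv M p t0) c) (hi t0 (\<sigma> @ [c]))" if "is_run (rr iv M p t0) 0 (\<sigma> @ [c])" for \<sigma> c
    by (rule F2) (use t0 that in auto)
  have h1: "is_run (rr iv M p t0) 0 (hh t0 x)" if "is_run M p x" for x
    by (rule H1) (use t0 that in auto)
  have h2: "is_run M p (hi t0 \<sigma>)" if "is_run (rr iv M p t0) 0 \<sigma>" for \<sigma>
    by (rule H2) (use t0 that in auto)
  have h3: "hi t0 (hh t0 x) = x" if "is_run M p x" for x
    by (rule H3) (use t0 that in auto)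
  have h4: "hh t0 (hi t0 \<sigma>) = \<sigma>" if "is_run (rr iv M p t0) 0 \<sigma>" for \<sigma>
    by (rule H4[where iv=iv]) (use t0 that in auto)
  note I = iso_generic[OF s1 s2, where h="hh t0" and g="hi t0", OF h1 h2 h3 h4 f1 f2]
  show "iso_at iv M p (rr iv M p t0) 0 (hh t0) [t0]"
    unfolding iso_at_def using I by (simp add: hh_def)
qed

lemma reroot:
  assumes wf: "mnfa_wf A M" and inv: "involutive_alphabet A iv" and p: "p \<in> states M"
  shows "is_run M p \<rho>0 \<Longrightarrow> \<exists>(M' :: 'a mnfa) p' h. mnfa_wf A M' \<and> p' \<in> states M' \<and> iso_at iv M p M' p' h \<rho>0"
proof (induction \<rho>0 rule: rev_induct)
  case Nil
  show ?case using wf p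
    by (intro exI[of _ M] exI[of _ p] exI[of _ id]) (auto simp: iso_at_def bij_betw_def inj_on_def)
next
  case (snoc t \<rho>)
  have r: "is_run M p \<rho>" using snoc.prems by (simp add: is_run_append)
  from snoc.IH[OF r] obtain M1 p1 h1 where wf1: "mnfa_wf A M1" "p1 \<in> states M1" and
    i1: "iso_at iv M p M1 p1 h1 \<rho>" by blast
  have ru: "\<rho> \<in> runs M p" "\<rho> @ [t] \<in> runs M p" using r snoc.prems by (auto simp: runs_def)
  have "(\<rho>, lab M t, \<rho> @ [t]) \<in> Gamma_edges iv M p" using gamma_adj[OF ru] by (simp add: adj_def)
  then have e: "([], lab M t, h1 (\<rho> @ [t])) \<in> Gamma_edges iv M1 p1" using i1 ru unfolding iso_at_def by auto
  have ru1: "h1 (\<rho> @ [t]) \<in> runs M1 p1" "[] \<in> runs M1 p1"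
  proof -
    have "bij_betw h1 (runs M p) (runs M1 p1)" using i1 unfolding iso_at_def by blast
    then show "h1 (\<rho> @ [t]) \<in> runs M1 p1" using ru(2) by (rule bij_betw_apply)
    show "[] \<in> runs M1 p1" by (simp add: runs_def)
  qed
  have "adj iv M1 [] (lab M t) (h1 (\<rho> @ [t]))" using e gamma_adj[OF ru1(2) ru1(1)] by simp
  then obtain t' where t': "h1 (\<rho> @ [t]) = [t']" by (auto simp: adj_def)
  then have t'r: "t' \<in> trans M1" "src_st M1 t' = p1" using ru1 by (auto simp: runs_def)
  from step[OF wf1(1) inv t'r] obtain M2 p2 h2 where wf2: "mnfa_wf A M2" "p2 \<in> states M2"
    and i2: "iso_at iv M1 p1 M2 p2 h2 [t']" by blast
  have "iso_at iv M p M2 p2 (h2 \<circ> h1) (\<rho> @ [t])"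
    unfolding iso_at_def
  proof (intro conjI)
    show "bij_betw (h2 \<circ> h1) (runs M p) (runs M2 p2)" using i1 i2 unfolding iso_at_def
      using bij_betw_trans by blast
    show "(h2 \<circ> h1) (\<rho> @ [t]) = []" using i2 t' by (simp add: iso_at_def)
    show "\<forall>x\<in>runs M p. \<forall>y\<in>runs M p. \<forall>a. ((x, a, y) \<in> Gamma_edges iv M p) = (((h2 \<circ> h1) x, a, (h2 \<circ> h1) y) \<in> Gamma_edges iv M2 p2)"
    proof (intro ballI allI)
      fix x y a assume x: "x \<in> runs M p" and y: "y \<in> runs M p"
      have "h1 x \<in> runs M1 p1" "h1 y \<in> runs M1 p1" using i1 x y unfolding iso_at_def by (auto simp: bij_betw_apply)
      then show "((x, a, y) \<in> Gamma_edges iv M p) = (((h2 \<circ> h1) x, a, (h2 \<circ> h1) y) \<in> Gamma_edges iv M2 p2)"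
        using i1 i2 x y unfolding iso_at_def by simp
    qed
  qed
  then show ?case using wf2 by blast
qed

lemma regular_one_dir:
  assumes inv: "involutive_alphabet A iv" and v: "v \<in> V"
    and reg: "regular_tree A iv V E u"
  shows "regular_tree A iv V E v"
proof -
  from reg obtain l :: "'v \<Rightarrow> nat" and M :: "'a mnfa" and p f g where
    wf: "mnfa_wf A M" "p \<in> states M" and bf: "bij_betw f V (runs M p)"
    and ed: "\<forall>x\<in>V. \<forall>y\<in>V. \<forall>a. (x, a, y) \<in> E \<longleftrightarrow> (f x, a, f y) \<in> Gamma_edges iv M p"
    unfolding regular_tree_def regular_labelled_def by auto
  have "f v \<in> runs M p" using bf v by (simp add: bij_betw_apply)
  then have "\<exists>(M' :: 'a mnfa) p' h. mnfa_wf A M' \<and> p' \<in> states M' \<and> iso_at iv M p M' p' h (f v)"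
    using reroot[OF wf(1) inv wf(2)] by (simp add: runs_def)
  then obtain M' p' h where wf': "mnfa_wf A M'" "p' \<in> states M'" and i: "iso_at iv M p M' p' h (f v)"
    by blast
  define f' where "f' = h \<circ> f"
  define l' where "l' = (\<lambda>x. run_end M' p' (f' x))"
  have bf': "bij_betw f' V (runs M' p')" using bf i unfolding f'_def iso_at_def using bij_betw_trans by blast
  have "regular_labelled A iv V E v l'"
    unfolding regular_labelled_def
  proof (intro exI conjI)
    show "mnfa_wf A M'" "p' \<in> states M'" by (fact wf')+
    show "bij_betw f' V (runs M' p')" by (fact bf')
    show "f' v = []" using i by (simp add: f'_def iso_at_def)
    show "\<forall>x\<in>V. \<forall>y\<in>V. \<forall>a. ((x, a, y) \<in> E) = ((f' x, a, f' y) \<in> Gamma_edges iv M' p')"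
    proof (intro ballI allI)
      fix x y a assume x: "x \<in> V" and y: "y \<in> V"
      have "f x \<in> runs M p" "f y \<in> runs M p" using bf x y by (auto simp: bij_betw_apply)
      then show "((x, a, y) \<in> E) = ((f' x, a, f' y) \<in> Gamma_edges iv M' p')"
        using ed x y i unfolding iso_at_def f'_def by simp
    qed
    have "f' ` V = runs M' p'" using bf' by (rule bij_betw_imp_surj_on)
    then have "l' ` V = run_end M' p' ` runs M' p'"
      unfolding l'_def by (simp add: image_image[symmetric])
    then show "bij_betw id (l' ` V) (run_end M' p' ` runs M' p')" by simp
    show "\<forall>x\<in>V. run_end M' p' (f' x) = id (l' x)" by (simp add: l'_def)
  qed
  then show ?thesis unfolding regular_tree_def by blast
qed

theorem proposition3p2:
  fixes A :: "'a set" and iv :: "'a \<Rightarrow> 'a"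
    and V :: "'v set" and E :: "('v \<times> 'a \<times> 'v) set" and r u v :: 'v
  assumes "involutive_alphabet A iv"
    and "A_graph A V E"
    and "involutive_graph iv E"
    and "rooted_tree iv V E r"
    and "u \<in> V" and "v \<in> V"
  shows "regular_tree A iv V E u \<longleftrightarrow> regular_tree A iv V E v"
  using regular_one_dir[OF assms(1) assms(6)] regular_one_dir[OF assms(1) assms(5)] by blast

end
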